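(* Let $\mathcal U$ be an unbalanced critical update family and $\alpha=\alpha(\mathcal U)$. Then there exists $u^*\in S^1$ such that $\min\{\alpha(u^* ),\alpha(-u^* )\}\ge\alpha+1$.
   Context: An update family is a finite collection $\mathcal U$ of finite subsets of $\mathbb Z^2\setminus\{0\}$ acting by $A_{t+1}=A_t\cup\{x:x+X\subset A_t\text{ for some }X\in\mathcal U\}$, closure $[A]=\bigcup_tA_t$. $\mathbb H_u=\{x\in\mathbb Z^2:\langle x,u\rangle<0\}$, $u$ stable if $[\mathbb H_u]=\mathbb H_u$, $\mathcal S$ the stable set. For rational $u$, $\ell_u=\{x:\langle x,u\rangle=0\}$, $\ell_u^\pm$ = origin plus sites of $\ell_u$ right/left of the origin looking in direction $u$; $\alpha^\pm(u)$ = minimal $|Z|$ with $[\mathbb H_u\cup Z]\cap\ell_u^\pm$ infinite; $\alpha(u)=\min\{\alpha^+,\alpha^-\}$ if both finite, else $\infty$ (irrational $u$: $\infty$ if stable, $0$ otherwise). $\alpha(\mathcal U)=\min_C\sup_{u\in C}\alpha(u)$ over open semicircles $C$. Critical: some semicircle has finite intersection with $\mathcal S$ and every open semicircle meets $\mathcal S$. A critical $\mathcal U$ is balanced if some closed semicircle $C$ has $\alpha(u)\le\alpha(\mathcal U)$ for all $u\in C$, and unbalanced otherwise. *)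

theory Defs
  imports Main "HOL-Library.Extended_Nat"
begin

type_synonym site = "int \<times> int"
type_synonym dir = "real \<times> real"

definition vadd :: "site \<Rightarrow> site \<Rightarrow> site" where
  "vadd x y = (fst x + fst y, snd x + snd y)"

definition update_family :: "site set set \<Rightarrow> bool" where
  "update_family U \<longleftrightarrow> finite U \<and> (\<forall>X\<in>U. finite X \<and> (0, 0) \<notin> X)"

definition step :: "site set set \<Rightarrow> site set \<Rightarrow> site set" where
  "step U A = A \<union> {x. \<exists>X\<in>U. vadd x ` X \<subseteq> A}"

definition closure_U :: "site set set \<Rightarrow> site set \<Rightarrow> site set" where
  "closure_U U A = (\<Union>t. (step U ^^ t) A)"

definition S1 :: "dir set" where
  "S1 = {u. (fst u)\<^sup>2 + (snd u)\<^sup>2 = 1}"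

definition ip :: "site \<Rightarrow> dir \<Rightarrow> real" where
  "ip x u = real_of_int (fst x) * fst u + real_of_int (snd x) * snd u"

definition halfplane :: "dir \<Rightarrow> site set" where
  "halfplane u = {x. ip x u < 0}"

definition stable_set :: "site set set \<Rightarrow> dir set" where
  "stable_set U = {u \<in> S1. closure_U U (halfplane u) = halfplane u}"

definition rational_dir :: "dir \<Rightarrow> bool" where
  "rational_dir u \<longleftrightarrow> (\<exists>a b :: int. (a, b) \<noteq> (0, 0) \<and> fst u * real_of_int b = snd u * real_of_int a)"

definition line :: "dir \<Rightarrow> site set" where
  "line u = {x. ip x u = 0}"

text \<open>Coordinate along the line in the direction to the right of u (u rotated clockwise).\<close>
definition rcoord :: "site \<Rightarrow> dir \<Rightarrow> real" where
  "rcoord x u = real_of_int (fst x) * snd u - real_of_int (snd x) * fst u"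

definition line_plus :: "dir \<Rightarrow> site set" where
  "line_plus u = {x \<in> line u. rcoord x u \<ge> 0}"

definition line_minus :: "dir \<Rightarrow> site set" where
  "line_minus u = {x \<in> line u. rcoord x u \<le> 0}"

definition alpha_plus :: "site set set \<Rightarrow> dir \<Rightarrow> enat" where
  "alpha_plus U u = Inf {enat (card Z) | Z. finite Z \<and>
      infinite (closure_U U (halfplane u \<union> Z) \<inter> line_plus u)}"

definition alpha_minus :: "site set set \<Rightarrow> dir \<Rightarrow> enat" where
  "alpha_minus U u = Inf {enat (card Z) | Z. finite Z \<and>
      infinite (closure_U U (halfplane u \<union> Z) \<inter> line_minus u)}"

definition alpha_dir :: "site set set \<Rightarrow> dir \<Rightarrow> enat" where
  "alpha_dir U u =
     (if rational_dir u then
        (if alpha_plus U u \<noteq> \<infinity> \<and> alpha_minus U u \<noteq> \<infinity>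
         then min (alpha_plus U u) (alpha_minus U u) else \<infinity>)
      else (if u \<in> stable_set U then \<infinity> else 0))"

definition open_semicircle :: "dir \<Rightarrow> dir set" where
  "open_semicircle v = {u \<in> S1. fst u * fst v + snd u * snd v > 0}"

definition closed_semicircle :: "dir \<Rightarrow> dir set" where
  "closed_semicircle v = {u \<in> S1. fst u * fst v + snd u * snd v \<ge> 0}"

definition alpha_family :: "site set set \<Rightarrow> enat" where
  "alpha_family U = (INF v\<in>S1. SUP u\<in>open_semicircle v. alpha_dir U u)"

definition critical :: "site set set \<Rightarrow> bool" where
  "critical U \<longleftrightarrow>
     (\<exists>v\<in>S1. finite (stable_set U \<inter> open_semicircle v)) \<and>
     (\<forall>v\<in>S1. stable_set U \<inter> open_semicircle v \<noteq> {})"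

definition balanced :: "site set set \<Rightarrow> bool" where
  "balanced U \<longleftrightarrow> critical U \<and>
     (\<exists>v\<in>S1. \<forall>u\<in>closed_semicircle v. alpha_dir U u \<le> alpha_family U)"

definition unbalanced :: "site set set \<Rightarrow> bool" where
  "unbalanced U \<longleftrightarrow> critical U \<and> \<not> balanced U"

end

theory Submission
  imports Defs
begin


lemma ip_vadd: "ip (vadd x y) u = ip x u + ip y u"
  by (simp add: ip_def vadd_def algebra_simps)

lemma rcoord_vadd: "rcoord (vadd x y) u = rcoord x u + rcoord y u"
  by (simp add: rcoord_def vadd_def algebra_simps)

lemma step_mono: assumes "A \<subseteq> B" shows "step U A \<subseteq> step U B"
proof
  fix x assume "x \<in> step U A"
  then consider "x \<in> A" | X where "X \<in> U" "vadd x ` X \<subseteq> A" unfolding step_def by auto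
  then show "x \<in> step U B"
  proof cases
    case 1 then show ?thesis using assms unfolding step_def by auto
  next
    case 2 have "vadd x ` X \<subseteq> B" using 2(2) assms by (rule subset_trans)
    then show ?thesis using 2 unfolding step_def by auto
  qed
qed

lemma iter_mono: "A \<subseteq> B \<Longrightarrow> (step U ^^ t) A \<subseteq> (step U ^^ t) B"
  by (induction t) (simp_all add: step_mono)

lemma closure_mono: "A \<subseteq> B \<Longrightarrow> closure_U U A \<subseteq> closure_U U B"
  unfolding closure_U_def by (intro UN_mono) (simp_all add: iter_mono)

lemma closure_fix: assumes "step U B = B" shows "closure_U U B = B"
proof -
  have "(step U ^^ t) B = B" for t by (induction t) (simp_all add: assms)
  thus ?thesis unfolding closure_U_def by simp
qed

lemma step_sub_closure: "step U A \<subseteq> closure_U U A"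
proof -
  have "(step U ^^ 1) A = step U A" by simp
  thus ?thesis unfolding closure_U_def by (metis UNIV_I UN_upper)
qed

lemma enat_Inf_in: "A \<noteq> {} \<Longrightarrow> Inf (A::enat set) \<in> A"
  unfolding Inf_enat_def by (auto intro: LeastI)

lemma S1_nz: "u \<in> S1 \<Longrightarrow> u \<noteq> (0,0)"
  by (auto simp: S1_def)

lemma rational_line_infinite:
  assumes "u \<in> S1" "rational_dir u"
  shows "infinite (line_plus u)" "infinite (line_minus u)"
proof -
  obtain a b :: int where ab: "(a,b) \<noteq> (0,0)" "fst u * real_of_int b = snd u * real_of_int a"
    using assms(2) unfolding rational_dir_def by blast
  define d where "d = real_of_int a * fst u + real_of_int b * snd u"
  have d: "d \<noteq> 0"
  proof
    assume "d = 0"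
    have e1: "real_of_int a * fst u = - (real_of_int b * snd u)" using \<open>d = 0\<close> unfolding d_def by simp
    have u1: "fst u * (real_of_int a ^ 2 + real_of_int b ^ 2) = 0"
    proof -
      have "fst u * (real_of_int a ^ 2 + real_of_int b ^ 2) = real_of_int a * (real_of_int a * fst u) + real_of_int b * (fst u * real_of_int b)"
        by (simp add: power2_eq_square algebra_simps)
      also have "\<dots> = 0" using e1 ab(2) by (simp add: algebra_simps)
      finally show ?thesis .
    qed
    have u2: "snd u * (real_of_int a ^ 2 + real_of_int b ^ 2) = 0"
    proof -
      have "snd u * (real_of_int a ^ 2 + real_of_int b ^ 2) = real_of_int a * (snd u * real_of_int a) + real_of_int b * (real_of_int b * snd u)"
        by (simp add: power2_eq_square algebra_simps)
      also have "\<dots> = real_of_int b * (real_of_int a * fst u) + real_of_int b * (real_of_int b * snd u)"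
        using ab(2) by (simp add: algebra_simps)
      also have "\<dots> = 0" using e1 by simp
      finally show ?thesis .
    qed
    have "real_of_int a ^ 2 + real_of_int b ^ 2 \<noteq> 0" using ab(1)
      by (smt (verit, best) of_int_eq_0_iff prod.inject sum_power2_eq_zero_iff)
    hence "fst u = 0" "snd u = 0" using u1 u2 by auto
    thus False using S1_nz[OF assms(1)] by (simp add: prod_eq_iff)
  qed
  define g where "g = (\<lambda>k::int. (k * b, - k * a))"
  have inj: "inj g" unfolding g_def inj_def using ab(1) by auto
  have online: "g k \<in> line u" for k
    unfolding g_def line_def ip_def using ab(2) by (simp add: algebra_simps)
  have rc: "rcoord (g k) u = real_of_int k * d" for k
    unfolding g_def rcoord_def d_def by (simp add: algebra_simps)
  define P where "P = {k::int. 0 \<le> real_of_int k * d}"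
  define M where "M = {k::int. real_of_int k * d \<le> 0}"
  have infP: "infinite P"
  proof (cases "d > 0")
    case True
    hence "{0..} \<subseteq> P" unfolding P_def by (auto simp: zero_le_mult_iff)
    thus ?thesis using infinite_Ici[of "0::int"] finite_subset by blast
  next
    case False
    hence "{..0} \<subseteq> P" using d unfolding P_def by (auto simp: zero_le_mult_iff)
    thus ?thesis using infinite_Iic[of "0::int"] finite_subset by blast
  qed
  have infM: "infinite M"
  proof (cases "d > 0")
    case True
    hence "{..0} \<subseteq> M" unfolding M_def by (auto simp: mult_le_0_iff)
    thus ?thesis using infinite_Iic[of "0::int"] finite_subset by blast
  next
    case False
    hence "{0..} \<subseteq> M" using d unfolding M_def by (auto simp: mult_le_0_iff)
    thus ?thesis using infinite_Ici[of "0::int"] finite_subset by blast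
  qed
  have injS: "inj_on g S" for S using inj by (rule inj_on_subset) simp
  have "g ` P \<subseteq> line_plus u" unfolding line_plus_def P_def using online rc by auto
  moreover have "infinite (g ` P)" using infP finite_image_iff[OF injS] by blast
  ultimately show "infinite (line_plus u)" using finite_subset by blast
  have "g ` M \<subseteq> line_minus u" unfolding line_minus_def M_def using online rc by auto
  moreover have "infinite (g ` M)" using infM finite_image_iff[OF injS] by blast
  ultimately show "infinite (line_minus u)" using finite_subset by blast
qed



lemma line_in_closure:
  assumes "X \<in> U" "\<forall>y\<in>X. ip y u < 0"
  shows "line u \<subseteq> closure_U U (halfplane u \<union> Z)"
proof
  fix x assume x: "x \<in> line u"
  have "vadd x ` X \<subseteq> halfplane u \<union> Z"
  proof
    fix z assume "z \<in> vadd x ` X"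
    then obtain y where y: "y \<in> X" "z = vadd x y" by auto
    have "ip z u = ip x u + ip y u" using y(2) ip_vadd by simp
    also have "\<dots> < 0" using x y(1) assms(2) unfolding line_def by auto
    finally show "z \<in> halfplane u \<union> Z" unfolding halfplane_def by simp
  qed
  hence "x \<in> step U (halfplane u \<union> Z)" using assms(1) unfolding step_def by auto
  thus "x \<in> closure_U U (halfplane u \<union> Z)" using step_sub_closure by (rule subsetD[rotated])
qed

lemma unstable_alpha0:
  assumes "u \<in> S1" "X \<in> U" "\<forall>y\<in>X. ip y u < 0"
  shows "alpha_dir U u = 0"
proof (cases "rational_dir u")
  case True
  have lp: "infinite (closure_U U (halfplane u \<union> {}) \<inter> line_plus u)"
  proof -
    have "line_plus u \<subseteq> closure_U U (halfplane u \<union> {}) \<inter> line_plus u"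
      using line_in_closure[OF assms(2,3), of "{}"] unfolding line_plus_def by auto
    thus ?thesis using rational_line_infinite(1)[OF assms(1) True] finite_subset by blast
  qed
  have lm: "infinite (closure_U U (halfplane u \<union> {}) \<inter> line_minus u)"
  proof -
    have "line_minus u \<subseteq> closure_U U (halfplane u \<union> {}) \<inter> line_minus u"
      using line_in_closure[OF assms(2,3), of "{}"] unfolding line_minus_def by auto
    thus ?thesis using rational_line_infinite(2)[OF assms(1) True] finite_subset by blast
  qed
  have "alpha_plus U u \<le> enat (card ({}::site set))"
    unfolding alpha_plus_def by (rule Inf_lower) (use lp in blast)
  hence p: "alpha_plus U u = 0" by (simp add: zero_enat_def[symmetric])
  have "alpha_minus U u \<le> enat (card ({}::site set))"
    unfolding alpha_minus_def by (rule Inf_lower) (use lm in blast)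
  hence m: "alpha_minus U u = 0" by (simp add: zero_enat_def[symmetric])
  show ?thesis unfolding alpha_dir_def using True p m by simp
next
  case False
  have "(0,0) \<in> closure_U U (halfplane u \<union> {})"
    using line_in_closure[OF assms(2,3), of "{}"] unfolding line_def ip_def by auto
  moreover have "(0,0) \<notin> halfplane u" unfolding halfplane_def ip_def by simp
  ultimately have "u \<notin> stable_set U" unfolding stable_set_def by auto
  thus ?thesis unfolding alpha_dir_def using False by simp
qed

lemma small_k:
  fixes b c :: "'a \<Rightarrow> real"
  assumes "finite Y" "\<forall>y\<in>Y. b y \<ge> 0 \<and> (P y \<longrightarrow> c y > 0)"
  shows "\<exists>k>0. \<forall>y\<in>Y. P y \<longrightarrow> k * b y < c y"
  using assms
proof (induction Y rule: finite_induct)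
  case empty
  then show ?case by (auto intro: exI[of _ 1])
next
  case (insert z F)
  then obtain k where k: "k > 0" "\<forall>y\<in>F. P y \<longrightarrow> k * b y < c y" by auto
  show ?case
  proof (cases "P z")
    case False
    then show ?thesis using k by auto
  next
    case True
    have bz: "b z \<ge> 0" "c z > 0" using insert.prems True by auto
    define k' where "k' = min k (c z / (b z + 1))"
    have k'pos: "k' > 0" unfolding k'_def using k bz by auto
    have "k' * b y \<le> k * b y" if "y \<in> F" for y
      using insert.prems that unfolding k'_def by (intro mult_right_mono) auto
    hence F: "\<forall>y\<in>F. P y \<longrightarrow> k' * b y < c y" using k by force
    have "k' * b z \<le> (c z / (b z + 1)) * b z" unfolding k'_def using bz by (intro mult_right_mono) auto
    also have "\<dots> < c z"
    proof -
      have "(c z / (b z + 1)) * b z = c z * (b z / (b z + 1))" by simp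
      also have "\<dots> < c z * 1" using bz by (intro mult_strict_left_mono) auto
      finally show ?thesis by simp
    qed
    finally show ?thesis using F k'pos by auto
  qed
qed

lemma finite_bound:
  fixes h :: "'a \<Rightarrow> real"
  assumes "finite Z" shows "\<exists>c. \<forall>z\<in>Z. h z < c"
proof -
  have "\<forall>z\<in>Z. h z < Max (insert 0 (h ` Z)) + 1"
  proof
    fix z assume "z \<in> Z"
    hence "h z \<le> Max (insert 0 (h ` Z))" using assms by (intro Max_ge) auto
    thus "h z < Max (insert 0 (h ` Z)) + 1" by linarith
  qed
  thus ?thesis by blast
qed

lemma decomp:
  assumes "q \<in> S1"
  shows "a = (a * fst q + b * snd q) * fst q + (a * snd q - b * fst q) * snd q"
    and "b = (a * fst q + b * snd q) * snd q - (a * snd q - b * fst q) * fst q"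
proof -
  have n: "(fst q)^2 + (snd q)^2 = 1" using assms unfolding S1_def by auto
  have "(a * fst q + b * snd q) * fst q + (a * snd q - b * fst q) * snd q = a * ((fst q)^2 + (snd q)^2)"
    by (simp add: power2_eq_square algebra_simps)
  thus "a = (a * fst q + b * snd q) * fst q + (a * snd q - b * fst q) * snd q" using n by simp
  have "(a * fst q + b * snd q) * snd q - (a * snd q - b * fst q) * fst q = b * ((fst q)^2 + (snd q)^2)"
    by (simp add: power2_eq_square algebra_simps)
  thus "b = (a * fst q + b * snd q) * snd q - (a * snd q - b * fst q) * fst q" using n by simp
qed

lemma S1_abs: assumes "q \<in> S1" shows "\<bar>fst q\<bar> \<le> 1" "\<bar>snd q\<bar> \<le> 1"
proof -
  have n: "(fst q)^2 + (snd q)^2 = 1" using assms unfolding S1_def by auto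
  have "(fst q)^2 \<le> 1" using n zero_le_power2[of "snd q"] by linarith
  hence a: "(fst q)^2 \<le> 1^2" by simp
  have "(snd q)^2 \<le> 1" using n zero_le_power2[of "fst q"] by linarith
  hence b: "(snd q)^2 \<le> 1^2" by simp
  show "\<bar>fst q\<bar> \<le> 1" using abs_le_square_iff[of "fst q" 1] a by simp
  show "\<bar>snd q\<bar> \<le> 1" using abs_le_square_iff[of "snd q" 1] b by simp
qed



lemma lex_alpha_inf:
  assumes uf: "update_family U" and q: "q \<in> S1" and sig: "\<sigma> = 1 \<or> \<sigma> = -1"
    and P: "\<forall>X\<in>U. \<exists>y\<in>X. ip y q > 0 \<or> (ip y q = 0 \<and> \<sigma> * rcoord y q > 0)"
  shows "alpha_dir U q = \<infinity>"
proof -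
  define Lex where "Lex y \<longleftrightarrow> ip y q > 0 \<or> (ip y q = 0 \<and> \<sigma> * rcoord y q > 0)" for y
  have s2: "\<sigma> * \<sigma> = 1" using sig by auto
  have sabs: "\<bar>\<sigma> * r\<bar> = \<bar>r\<bar>" for r using sig by auto
  have finY: "finite (\<Union>U)" using uf unfolding update_family_def by auto
  obtain k where k: "k > 0" "\<forall>y\<in>\<Union>U. ip y q \<noteq> 0 \<longrightarrow> k * \<bar>rcoord y q\<bar> < \<bar>ip y q\<bar>"
    using small_k[OF finY, of "\<lambda>y. \<bar>rcoord y q\<bar>" "\<lambda>y. ip y q \<noteq> 0" "\<lambda>y. \<bar>ip y q\<bar>"] by auto
  define h where "h x = ip x q + k * (\<sigma> * rcoord x q)" for x
  have h_add: "h (vadd x y) = h x + h y" for x y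
    unfolding h_def ip_vadd rcoord_vadd by (simp add: algebra_simps)
  have hpos: "h y > 0" if "y \<in> \<Union>U" "Lex y" for y
  proof (cases "ip y q > 0")
    case True
    have imp: "ip y q \<noteq> 0 \<longrightarrow> k * \<bar>rcoord y q\<bar> < \<bar>ip y q\<bar>" using k(2) that(1) by (rule bspec)
    have "k * \<bar>rcoord y q\<bar> < \<bar>ip y q\<bar>" using imp True by simp
    hence "k * \<bar>rcoord y q\<bar> < ip y q" using True by simp
    moreover have "- \<bar>rcoord y q\<bar> \<le> \<sigma> * rcoord y q" using sabs[of "rcoord y q"] by linarith
    hence "- (k * \<bar>rcoord y q\<bar>) \<le> k * (\<sigma> * rcoord y q)" using k(1)
      by (metis minus_mult_right mult_le_cancel_left_pos)
    ultimately show ?thesis unfolding h_def by linarith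
  next
    case False
    hence "ip y q = 0" "\<sigma> * rcoord y q > 0" using that(2) unfolding Lex_def by auto
    thus ?thesis unfolding h_def using k(1) by simp
  qed
  have stab: "q \<in> stable_set U"
  proof -
    have "step U (halfplane q) \<subseteq> halfplane q"
    proof
      fix x assume x: "x \<in> step U (halfplane q)"
      show "x \<in> halfplane q"
      proof (rule ccontr)
        assume nx: "x \<notin> halfplane q"
        then obtain X where X: "X \<in> U" "vadd x ` X \<subseteq> halfplane q" using x unfolding step_def by auto
        obtain y where y: "y \<in> X" "Lex y" using P X(1) unfolding Lex_def by auto
        have "ip y q \<ge> 0" using y(2) unfolding Lex_def by auto
        moreover have "ip x q \<ge> 0" using nx unfolding halfplane_def by auto
        moreover have "vadd x y \<in> halfplane q" using X(2) y(1) by auto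
        ultimately show False unfolding halfplane_def by (simp add: ip_vadd)
      qed
    qed
    hence "step U (halfplane q) = halfplane q" unfolding step_def by auto
    thus ?thesis using closure_fix q unfolding stable_set_def by auto
  qed
  define L where "L = {x \<in> line q. \<sigma> * rcoord x q \<ge> 0}"
  have fin: "finite (closure_U U (halfplane q \<union> Z) \<inter> L)" if Z: "finite Z" for Z
  proof -
    obtain c where c: "\<forall>z\<in>Z. h z < c" using finite_bound[OF Z] by blast
    define K where "K x \<longleftrightarrow> (ip x q > 0 \<or> (ip x q = 0 \<and> \<sigma> * rcoord x q \<ge> 0)) \<and> h x \<ge> c" for x
    define B where "B = {x. \<not> K x}"
    have sub: "halfplane q \<union> Z \<subseteq> B"
      unfolding B_def K_def halfplane_def using c by force
    have "step U B \<subseteq> B"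
    proof
      fix x assume x: "x \<in> step U B"
      show "x \<in> B"
      proof (rule ccontr)
        assume nx: "x \<notin> B"
        hence Kx: "K x" unfolding B_def by auto
        then obtain X where X: "X \<in> U" "vadd x ` X \<subseteq> B" using x nx unfolding step_def by auto
        obtain y where y: "y \<in> X" "Lex y" using P X(1) unfolding Lex_def by auto
        have yU: "y \<in> \<Union>U" using X(1) y(1) by auto
        have "h y > 0" using hpos[OF yU y(2)] .
        hence "K (vadd x y)" using Kx y(2) unfolding K_def Lex_def h_add ip_vadd rcoord_vadd
          by (auto simp: algebra_simps)
        moreover have "vadd x y \<in> B" using X(2) y(1) by auto
        ultimately show False unfolding B_def by auto
      qed
    qed
    hence "step U B = B" unfolding step_def by auto
    hence "closure_U U (halfplane q \<union> Z) \<subseteq> B" using closure_mono[OF sub, of U] closure_fix by auto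
    moreover define N where "N = c / k"
    have "B \<inter> L \<subseteq> {x. \<bar>real_of_int (fst x)\<bar> \<le> N \<and> \<bar>real_of_int (snd x)\<bar> \<le> N}"
    proof
      fix x assume x: "x \<in> B \<inter> L"
      have ip0: "ip x q = 0" and sr: "\<sigma> * rcoord x q \<ge> 0" using x unfolding L_def line_def by auto
      have "h x < c" using x ip0 sr unfolding B_def K_def by auto
      hence "k * (\<sigma> * rcoord x q) < c" unfolding h_def using ip0 by simp
      hence "\<sigma> * rcoord x q < N" unfolding N_def using k(1) by (simp add: field_simps)
      hence rb: "\<bar>rcoord x q\<bar> \<le> N" using sr sabs[of "rcoord x q"] by auto
      have e1: "real_of_int (fst x) = rcoord x q * snd q"
        using decomp(1)[OF q, where a="real_of_int (fst x)" and b="real_of_int (snd x)"] ip0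
        unfolding ip_def rcoord_def by simp
      have e2: "real_of_int (snd x) = - (rcoord x q * fst q)"
        using decomp(2)[OF q, where a="real_of_int (fst x)" and b="real_of_int (snd x)"] ip0
        unfolding ip_def rcoord_def by simp
      have "\<bar>rcoord x q * snd q\<bar> \<le> N" using rb S1_abs[OF q]
        by (simp add: abs_mult) (metis abs_ge_zero mult_left_le mult.commute order_trans)
      moreover have "\<bar>rcoord x q * fst q\<bar> \<le> N" using rb S1_abs[OF q]
        by (simp add: abs_mult) (metis abs_ge_zero mult_left_le mult.commute order_trans)
      ultimately show "x \<in> {x. \<bar>real_of_int (fst x)\<bar> \<le> N \<and> \<bar>real_of_int (snd x)\<bar> \<le> N}"
        using e1 e2 by simp
    qed
    moreover have "finite {x::site. \<bar>real_of_int (fst x)\<bar> \<le> N \<and> \<bar>real_of_int (snd x)\<bar> \<le> N}"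
    proof -
      have "{x::site. \<bar>real_of_int (fst x)\<bar> \<le> N \<and> \<bar>real_of_int (snd x)\<bar> \<le> N}
            \<subseteq> {-\<lceil>N\<rceil>..\<lceil>N\<rceil>} \<times> {-\<lceil>N\<rceil>..\<lceil>N\<rceil>}"
      proof
        fix x :: site assume "x \<in> {x. \<bar>real_of_int (fst x)\<bar> \<le> N \<and> \<bar>real_of_int (snd x)\<bar> \<le> N}"
        hence a: "\<bar>real_of_int (fst x)\<bar> \<le> N" "\<bar>real_of_int (snd x)\<bar> \<le> N" by auto
        have "\<bar>fst x\<bar> \<le> \<lceil>N\<rceil>" "\<bar>snd x\<bar> \<le> \<lceil>N\<rceil>" using a
          by (metis ceiling_mono ceiling_of_int of_int_abs)+
        thus "x \<in> {-\<lceil>N\<rceil>..\<lceil>N\<rceil>} \<times> {-\<lceil>N\<rceil>..\<lceil>N\<rceil>}" by (cases x) auto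
      qed
      thus ?thesis by (rule finite_subset) simp
    qed
    ultimately show ?thesis by (meson finite_subset inf_mono order_refl)
  qed
  have empt: "{enat (card Z) | Z. finite Z \<and> infinite (closure_U U (halfplane q \<union> Z) \<inter> L)} = {}"
    using fin by auto
  show ?thesis
  proof (cases "rational_dir q")
    case False then show ?thesis using stab unfolding alpha_dir_def by simp
  next
    case True
    show ?thesis
    proof (cases "\<sigma> = 1")
      case True
      hence "L = line_plus q" unfolding L_def line_plus_def by auto
      hence e: "{enat (card Z) | Z. finite Z \<and> infinite (closure_U U (halfplane q \<union> Z) \<inter> line_plus q)} = {}"
        using empt by simp
      have "alpha_plus U q = Inf {}" unfolding alpha_plus_def e ..
      hence "alpha_plus U q = \<infinity>" by (simp add: top_enat_def)
      thus ?thesis unfolding alpha_dir_def using stab by simp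
    next
      case False
      hence "\<sigma> = -1" using sig by auto
      hence "L = line_minus q" unfolding L_def line_minus_def by auto
      hence e: "{enat (card Z) | Z. finite Z \<and> infinite (closure_U U (halfplane q \<union> Z) \<inter> line_minus q)} = {}"
        using empt by simp
      have "alpha_minus U q = Inf {}" unfolding alpha_minus_def e ..
      hence "alpha_minus U q = \<infinity>" by (simp add: top_enat_def)
      thus ?thesis unfolding alpha_dir_def using stab by simp
    qed
  qed
qed



lemma orth:
  assumes q: "q \<in> S1" and v: "v \<in> S1" and qv: "fst q * fst v + snd q * snd v = 0"
  shows "\<exists>\<sigma>. (\<sigma> = 1 \<or> \<sigma> = -1) \<and> v = (- \<sigma> * snd q, \<sigma> * fst q)"
proof -
  have nq: "(fst q)^2 + (snd q)^2 = 1" using q unfolding S1_def by auto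
  have nv: "(fst v)^2 + (snd v)^2 = 1" using v unfolding S1_def by auto
  have qv1: "snd q * snd v = - (fst q * fst v)" using qv by linarith
  have qv2: "fst q * fst v = - (snd q * snd v)" using qv by linarith
  define t where "t = fst q * snd v - snd q * fst v"
  have "- t * snd q = fst v * ((fst q)^2 + (snd q)^2)"
  proof -
    have "- t * snd q = - fst q * (snd q * snd v) + (snd q)^2 * fst v" unfolding t_def
      by (simp add: power2_eq_square algebra_simps)
    also have "\<dots> = fst q * (fst q * fst v) + (snd q)^2 * fst v"
      unfolding qv1 by simp
    also have "\<dots> = fst v * ((fst q)^2 + (snd q)^2)" by (simp add: power2_eq_square algebra_simps)
    finally show ?thesis .
  qed
  hence e1: "fst v = - t * snd q" using nq by simp
  have "t * fst q = snd v * ((fst q)^2 + (snd q)^2)"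
  proof -
    have "t * fst q = (fst q)^2 * snd v - snd q * (fst q * fst v)" unfolding t_def
      by (simp add: power2_eq_square algebra_simps)
    also have "\<dots> = (fst q)^2 * snd v + snd q * (snd q * snd v)"
      unfolding qv2 by simp
    also have "\<dots> = snd v * ((fst q)^2 + (snd q)^2)" by (simp add: power2_eq_square algebra_simps)
    finally show ?thesis .
  qed
  hence e2: "snd v = t * fst q" using nq by simp
  have "t^2 = t^2 * ((fst q)^2 + (snd q)^2)" using nq by simp
  also have "\<dots> = (fst v)^2 + (snd v)^2" unfolding e1 e2 by (simp add: power2_eq_square algebra_simps)
  finally have "t^2 = 1" using nv by simp
  hence "t = 1 \<or> t = -1" by (simp add: power2_eq_1_iff)
  moreover have "v = (- t * snd q, t * fst q)" using e1 e2 by (simp add: prod_eq_iff)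
  ultimately show ?thesis by blast
qed



theorem mainTheorem4:
  fixes U :: "site set set"
  assumes "update_family U"
    and "unbalanced U"
  shows "\<exists>u\<in>S1. min (alpha_dir U u) (alpha_dir U (- fst u, - snd u)) \<ge> alpha_family U + 1"
proof (rule ccontr)
  assume neg: "\<not> ?thesis"
  have uf: "update_family U" by fact
  have crit: "critical U" and nb: "\<not> balanced U" using assms(2) unfolding unbalanced_def by auto
  have e10: "(1::real, 0::real) \<in> S1" unfolding S1_def by simp
  have afin: "alpha_family U \<noteq> \<infinity>"
  proof
    assume "alpha_family U = \<infinity>"
    hence "balanced U" unfolding balanced_def using crit e10 by auto
    thus False using nb by simp
  qed
  then obtain n where an: "alpha_family U = enat n" by auto
  define g where "g v = (SUP u\<in>open_semicircle v. alpha_dir U u)" for v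
  have "alpha_family U \<in> g ` S1" unfolding alpha_family_def g_def[symmetric]
    by (rule enat_Inf_in) (use e10 in auto)
  then obtain v where v: "v \<in> S1" "g v = alpha_family U" by auto
  have lo: "alpha_dir U u \<le> alpha_family U" if "u \<in> open_semicircle v" for u
  proof -
    have "alpha_dir U u \<le> g v" unfolding g_def using that by (rule SUP_upper)
    thus ?thesis using v(2) by simp
  qed
  obtain p where p: "p \<in> closed_semicircle v" "\<not> alpha_dir U p \<le> alpha_family U"
    using nb crit v(1) unfolding balanced_def by auto
  have pS: "p \<in> S1" and pv0: "fst p * fst v + snd p * snd v \<ge> 0" using p(1) unfolding closed_semicircle_def by auto
  have pv: "fst p * fst v + snd p * snd v = 0"
  proof (rule ccontr)
    assume "fst p * fst v + snd p * snd v \<noteq> 0"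
    hence "p \<in> open_semicircle v" using pS pv0 unfolding open_semicircle_def by auto
    thus False using lo p(2) by auto
  qed
  have fp: "alpha_dir U p \<ge> alpha_family U + 1"
  proof -
    have "enat n < alpha_dir U p" using p(2) an by auto
    hence "enat (Suc n) \<le> alpha_dir U p" by (simp add: Suc_ile_eq)
    thus ?thesis using an by (simp add: one_enat_def)
  qed
  define q where "q = (- fst p, - snd p)"
  have qS: "q \<in> S1" using pS unfolding q_def S1_def by auto
  have fq: "alpha_dir U q \<le> alpha_family U"
  proof -
    have "\<not> min (alpha_dir U p) (alpha_dir U (- fst p, - snd p)) \<ge> alpha_family U + 1"
    proof
      assume h: "min (alpha_dir U p) (alpha_dir U (- fst p, - snd p)) \<ge> alpha_family U + 1"
      have "\<exists>u\<in>S1. min (alpha_dir U u) (alpha_dir U (- fst u, - snd u)) \<ge> alpha_family U + 1"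
        using h pS by (rule bexI)
      thus False using neg by simp
    qed
    hence "\<not> alpha_dir U q \<ge> alpha_family U + 1" using fp unfolding q_def by (simp add: min_def split: if_splits)
    hence "alpha_dir U q < enat (Suc n)" using an by (simp add: one_enat_def)
    thus ?thesis using an by (cases "alpha_dir U q") auto
  qed
  have qv: "fst q * fst v + snd q * snd v = 0" using pv unfolding q_def by simp
  obtain \<sigma> where sig: "\<sigma> = 1 \<or> \<sigma> = -1" and vq: "v = (- \<sigma> * snd q, \<sigma> * fst q)"
    using orth[OF qS v(1) qv] by blast
  have s2: "\<sigma> * \<sigma> = 1" using sig by auto
  have finY: "finite (\<Union>U)" using uf unfolding update_family_def by auto
  obtain k where k: "k > 0" "\<forall>y\<in>\<Union>U. ip y q \<noteq> 0 \<longrightarrow> k * \<bar>rcoord y q\<bar> < \<bar>ip y q\<bar>"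
    using small_k[OF finY, of "\<lambda>y. \<bar>rcoord y q\<bar>" "\<lambda>y. ip y q \<noteq> 0" "\<lambda>y. \<bar>ip y q\<bar>"] by auto
  show False
  proof (cases "\<forall>X\<in>U. \<exists>y\<in>X. ip y q > 0 \<or> (ip y q = 0 \<and> \<sigma> * rcoord y q > 0)")
    case True
    have "alpha_dir U q = \<infinity>" using lex_alpha_inf[OF uf qS sig True] .
    thus False using fq afin by simp
  next
    case False
    then obtain X0 where X0: "X0 \<in> U" "\<forall>y\<in>X0. \<not> (ip y q > 0 \<or> (ip y q = 0 \<and> \<sigma> * rcoord y q > 0))"
      by auto
    define m where "m = sqrt (1 + k^2)"
    have m: "m > 0" "m^2 = 1 + k^2" unfolding m_def by (auto simp: add_pos_nonneg)
    define v' where "v' = ((fst v + k * fst q) / m, (snd v + k * snd q) / m)"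
    have nq: "(fst q)^2 + (snd q)^2 = 1" using qS unfolding S1_def by auto
    have nv: "(fst v)^2 + (snd v)^2 = 1" using v(1) unfolding S1_def by auto
    have v'S: "v' \<in> S1"
    proof -
      have "(fst v + k * fst q)^2 + (snd v + k * snd q)^2
          = ((fst v)^2 + (snd v)^2) + 2 * k * (fst q * fst v + snd q * snd v) + k^2 * ((fst q)^2 + (snd q)^2)"
        by (simp add: power2_eq_square algebra_simps)
      also have "\<dots> = m^2" using nq nv qv m(2) by simp
      finally have "(fst v + k * fst q)^2 + (snd v + k * snd q)^2 = m^2" .
      thus ?thesis unfolding S1_def v'_def using m(1) by (simp add: power_divide add_divide_distrib[symmetric])
    qed
    have all: "alpha_dir U u \<le> alpha_family U" if u: "u \<in> closed_semicircle v'" for u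
    proof -
      have uS: "u \<in> S1" and W0: "fst u * fst v' + snd u * snd v' \<ge> 0"
        using u unfolding closed_semicircle_def by auto
      define A where "A = fst u * fst q + snd u * snd q"
      define \<rho> where "\<rho> = fst u * snd q - snd u * fst q"
      have uv: "fst u * fst v + snd u * snd v = - (\<sigma> * \<rho>)"
        unfolding vq \<rho>_def by (simp add: algebra_simps)
      have "fst u * fst v' + snd u * snd v' = (fst u * fst v + snd u * snd v + k * A) / m"
        unfolding v'_def A_def by (simp add: algebra_simps add_divide_distrib)
      hence W: "fst u * fst v + snd u * snd v + k * A \<ge> 0" using W0 m(1)
        by (simp add: zero_le_divide_iff)
      show ?thesis
      proof (cases "fst u * fst v + snd u * snd v > 0")
        case True
        hence "u \<in> open_semicircle v" using uS unfolding open_semicircle_def by auto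
        thus ?thesis by (rule lo)
      next
        case False
        have sr: "\<sigma> * \<rho> \<ge> 0" using False uv by linarith
        have kA: "k * A \<ge> \<sigma> * \<rho>" using W uv by linarith
        have "k * A \<ge> 0" using kA sr by linarith
        hence Anon: "A \<ge> 0" using k(1) by (simp add: zero_le_mult_iff)
        have du1: "fst u = A * fst q + \<rho> * snd q"
          using decomp(1)[OF qS, where a="fst u" and b="snd u"] unfolding A_def \<rho>_def by simp
        have du2: "snd u = A * snd q - \<rho> * fst q"
          using decomp(2)[OF qS, where a="fst u" and b="snd u"] unfolding A_def \<rho>_def by simp
        show ?thesis
        proof (cases "\<rho> = 0")
          case True
          have "A^2 = A^2 * ((fst q)^2 + (snd q)^2)" using nq by simp
          also have "\<dots> = (fst u)^2 + (snd u)^2" using du1 du2 True by (simp add: power2_eq_square algebra_simps)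
          also have "\<dots> = 1" using uS unfolding S1_def by simp
          finally have "A = 1" using Anon by (simp add: power2_eq_1_iff)
          hence "u = q" using du1 du2 True by (simp add: prod_eq_iff)
          thus ?thesis using fq by simp
        next
          case False
          have srp: "\<sigma> * \<rho> > 0" using sr False sig by auto
          have Apos: "A > 0"
          proof -
            have "k * A > 0" using kA srp by linarith
            thus ?thesis using k(1) by (simp add: zero_less_mult_iff)
          qed
          have "\<forall>y\<in>X0. ip y u < 0"
          proof
            fix y assume y: "y \<in> X0"
            have yU: "y \<in> \<Union>U" using y X0(1) by auto
            have ynz: "y \<noteq> (0,0)" using uf X0(1) y unfolding update_family_def by auto
            have ipu: "ip y u = A * ip y q + (\<sigma> * \<rho>) * (\<sigma> * rcoord y q)"
            proof -
              have "ip y u = A * ip y q + \<rho> * rcoord y q"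
                unfolding ip_def rcoord_def du1 du2 by (simp add: algebra_simps)
              also have "\<rho> * rcoord y q = (\<sigma> * \<sigma>) * (\<rho> * rcoord y q)" using s2 by simp
              finally show ?thesis by (simp add: algebra_simps)
            qed
            have ny: "\<not> (ip y q > 0 \<or> (ip y q = 0 \<and> \<sigma> * rcoord y q > 0))" using X0(2) y by blast
            show "ip y u < 0"
            proof (cases "ip y q = 0")
              case True
              have "\<sigma> * rcoord y q \<noteq> 0"
              proof
                assume "\<sigma> * rcoord y q = 0"
                hence r0: "rcoord y q = 0" using sig by auto
                have "real_of_int (fst y) = 0"
                  using decomp(1)[OF qS, where a="real_of_int (fst y)" and b="real_of_int (snd y)"] True r0
                  unfolding ip_def rcoord_def by simp
                moreover have "real_of_int (snd y) = 0"
                  using decomp(2)[OF qS, where a="real_of_int (fst y)" and b="real_of_int (snd y)"] True r0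
                  unfolding ip_def rcoord_def by simp
                ultimately show False using ynz by (simp add: prod_eq_iff)
              qed
              moreover have "\<not> \<sigma> * rcoord y q > 0" using ny True by auto
              ultimately have "\<sigma> * rcoord y q < 0" by linarith
              hence "(\<sigma> * \<rho>) * (\<sigma> * rcoord y q) < 0" using srp by (simp add: mult_pos_neg)
              thus ?thesis using ipu True by simp
            next
              case False
              hence neg: "ip y q < 0" using ny by auto
              have imp: "ip y q \<noteq> 0 \<longrightarrow> k * \<bar>rcoord y q\<bar> < \<bar>ip y q\<bar>" using k(2) yU by (rule bspec)
              have "k * \<bar>rcoord y q\<bar> < \<bar>ip y q\<bar>" using imp False by simp
              hence kr: "k * \<bar>rcoord y q\<bar> < - ip y q" using neg by simp
              have "(\<sigma> * \<rho>) * (\<sigma> * rcoord y q) \<le> (\<sigma> * \<rho>) * \<bar>rcoord y q\<bar>"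
                using srp sig by (intro mult_left_mono) auto
              also have "\<dots> \<le> (k * A) * \<bar>rcoord y q\<bar>" using kA by (intro mult_right_mono) auto
              finally have t1: "(\<sigma> * \<rho>) * (\<sigma> * rcoord y q) \<le> A * (k * \<bar>rcoord y q\<bar>)" by (simp add: algebra_simps)
              have "A * (k * \<bar>rcoord y q\<bar>) < A * (- ip y q)" using kr Apos by (rule mult_strict_left_mono)
              thus ?thesis using t1 ipu by (simp add: algebra_simps)
            qed
          qed
          hence "alpha_dir U u = 0" using unstable_alpha0[OF uS X0(1)] by simp
          thus ?thesis by simp
        qed
      qed
    qed
    have "balanced U" unfolding balanced_def using crit v'S all by blast
    thus False using nb by simp
  qed
qed

end
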